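(* Let $r=r(n)\ge3$ and $m=m(n)$ be integers with $r^{-2}n\le m=o(r^{-3}n^{3/2})$, and let $M_0^*=\bigl\lceil\log(r^{-2}n)+\frac{3^4r^2m}{n}\bigr\rceil$. Then, as $n\to\infty$, the number of hypergraphs in $\mathcal{L}_r(n,m)$ in which every vertex has degree at most $M_0^*$ equals $\bigl(1-O(r^6/n^3)\bigr)|\mathcal{L}_r(n,m)|$.
   Context: An $r$-graph on $[n]$ is a set of $r$-subsets of $[n]$ (edges); it is linear if any two distinct edges share at most one vertex. $\mathcal{L}_r(n,m)$ is the set of linear $r$-graphs on $[n]$ with exactly $m$ edges. The degree of a vertex is the number of edges containing it. $\log$ is the natural logarithm. *)

theory Defs
  imports Complex_Main "HOL-Library.Landau_Symbols"
begin

definition linear_rgraph :: "nat \<Rightarrow> nat \<Rightarrow> nat set set \<Rightarrow> bool" where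
  "linear_rgraph r n H \<longleftrightarrow>
     (\<forall>e\<in>H. e \<subseteq> {1..n} \<and> card e = r) \<and>
     (\<forall>e\<in>H. \<forall>f\<in>H. e \<noteq> f \<longrightarrow> card (e \<inter> f) \<le> 1)"

definition Lin :: "nat \<Rightarrow> nat \<Rightarrow> nat \<Rightarrow> nat set set set" where
  "Lin r n m = {H. linear_rgraph r n H \<and> card H = m}"

definition degree :: "nat set set \<Rightarrow> nat \<Rightarrow> nat" where
  "degree H v = card {e\<in>H. v \<in> e}"

definition M0star :: "nat \<Rightarrow> nat \<Rightarrow> nat \<Rightarrow> int" where
  "M0star r n m = \<lceil>ln (real n / real r ^ 2) + 3^4 * real r ^ 2 * real m / real n\<rceil>"

end

theory Submission imports Defs "HOL-Analysis.Complex_Transcendental"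
begin

definition Er :: "nat \<Rightarrow> nat \<Rightarrow> nat set set" where
  "Er r n = {e. e \<subseteq> {1..n} \<and> card e = r}"

lemma finite_Er: "finite (Er r n)"
  unfolding Er_def by (rule finite_subset[of _ "Pow {1..n}"]) auto

lemma card_Er: "card (Er r n) = n choose r"
  unfolding Er_def using n_subsets[of "{1..n}" r] by simp

lemma Lin_sub: "Lin r n j \<subseteq> Pow (Er r n)"
  unfolding Lin_def linear_rgraph_def Er_def by auto

lemma finite_Lin: "finite (Lin r n j)"
  using Lin_sub finite_Er by (meson finite_Pow_iff finite_subset)

lemma Lin_finite_H: "H \<in> Lin r n j \<Longrightarrow> finite H"
  using Lin_sub finite_Er by (meson PowD finite_subset subsetD)

lemma card_contain:
  assumes "p \<subseteq> {1..n}" "card p = d" "d \<le> r"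
  shows "card {e \<in> Er r n. p \<subseteq> e} \<le> (n - d) choose (r - d)"
proof -
  have fp: "finite p" using assms(1) finite_subset by blast
  have "card {e \<in> Er r n. p \<subseteq> e} \<le> card {B. B \<subseteq> {1..n} - p \<and> card B = r - d}"
  proof (rule card_inj_on_le[where f = "\<lambda>e. e - p"])
    show "inj_on (\<lambda>e. e - p) {e \<in> Er r n. p \<subseteq> e}"
      by (rule inj_onI) blast
    show "(\<lambda>e. e - p) ` {e \<in> Er r n. p \<subseteq> e} \<subseteq> {B. B \<subseteq> {1..n} - p \<and> card B = r - d}"
      using assms fp by (auto simp: Er_def card_Diff_subset)
    show "finite {B. B \<subseteq> {1..n} - p \<and> card B = r - d}" by auto
  qed
  also have "\<dots> = card ({1..n} - p) choose (r - d)" by (rule n_subsets) auto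
  also have "card ({1..n} - p) = n - d" using assms fp by (simp add: card_Diff_subset)
  finally show ?thesis .
qed

lemma binom_id1: "1 \<le> r \<Longrightarrow> 1 \<le> n \<Longrightarrow> n * ((n - 1) choose (r - 1)) = r * (n choose r)"
proof -
  assume a: "1 \<le> r" "1 \<le> n"
  obtain n' r' where nr: "n = Suc n'" "r = Suc r'" using a by (metis Suc_pred' less_eq_Suc_le One_nat_def)
  have "Suc n' * (n' choose r') = (Suc n' choose Suc r') * Suc r'" by (rule Suc_times_binomial_eq)
  then show ?thesis unfolding nr diff_Suc_1 by (simp only: mult.commute)
qed

lemma binom_id2: "2 \<le> r \<Longrightarrow> 2 \<le> n \<Longrightarrow>
   n * (n - 1) * ((n - 2) choose (r - 2)) = r * (r - 1) * (n choose r)"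
proof -
  assume a: "2 \<le> r" "2 \<le> n"
  have h: "(n - 1) * ((n - 1 - 1) choose (r - 1 - 1)) = (r - 1) * ((n - 1) choose (r - 1))"
    by (rule binom_id1) (use a in linarith)+
  have e: "n - 1 - 1 = n - 2" "r - 1 - 1 = r - 2" by auto
  have h2: "n * ((n - 1) choose (r - 1)) = r * (n choose r)"
    by (rule binom_id1) (use a in linarith)+
  have "n * (n - 1) * ((n - 2) choose (r - 2)) = n * ((n - 1) * ((n - 2) choose (r - 2)))"
    by (simp only: mult.assoc)
  also have "\<dots> = n * ((r - 1) * ((n - 1) choose (r - 1)))" using h unfolding e by simp
  also have "\<dots> = (r - 1) * (n * ((n - 1) choose (r - 1)))" by (simp only: mult.left_commute)
  also have "\<dots> = (r - 1) * (r * (n choose r))" by (simp only: h2)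
  also have "\<dots> = r * (r - 1) * (n choose r)" by (simp only: mult.left_commute mult.assoc)
  finally show ?thesis .
qed

lemma lin_subset: "linear_rgraph r n H \<Longrightarrow> G \<subseteq> H \<Longrightarrow> linear_rgraph r n G"
proof -
  assume h: "linear_rgraph r n H" and s: "G \<subseteq> H"
  have A: "\<And>e. e \<in> H \<Longrightarrow> e \<subseteq> {1..n} \<and> card e = r"
    and B: "\<And>e f. e \<in> H \<Longrightarrow> f \<in> H \<Longrightarrow> e \<noteq> f \<Longrightarrow> card (e \<inter> f) \<le> 1"
    using h unfolding linear_rgraph_def by auto
  show ?thesis unfolding linear_rgraph_def
  proof (rule conjI; intro ballI impI)
    fix e assume "e \<in> G" then show "e \<subseteq> {1..n} \<and> card e = r" using A s by auto
  next
    fix e f assume "e \<in> G" "f \<in> G" "e \<noteq> f" then show "card (e \<inter> f) \<le> 1" using B s by auto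
  qed
qed

definition Free :: "nat \<Rightarrow> nat \<Rightarrow> nat set set \<Rightarrow> nat \<Rightarrow> nat set set" where
  "Free r n G j = {e \<in> Er r n. e \<notin> G \<and> insert e G \<in> Lin r n (Suc j)}"

lemma nonfree_bound:
  assumes G: "G \<in> Lin r n j" and r2: "2 \<le> r"
  shows "card (Er r n) \<le> card (Free r n G j) + j * (r choose 2) * ((n - 2) choose (r - 2))"
proof -
  define P where "P g = {p. p \<subseteq> g \<and> card p = 2}" for g :: "nat set"
  define U where "U = (\<Union>g\<in>G. \<Union>p\<in>P g. {e \<in> Er r n. p \<subseteq> e})"
  have finG: "finite G" using Lin_finite_H[OF G] .
  have cardG: "card G = j" using G by (simp add: Lin_def)
  have linG: "linear_rgraph r n G" using G by (simp add: Lin_def)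
  have incl: "Er r n \<subseteq> Free r n G j \<union> U"
  proof
    fix e assume eE: "e \<in> Er r n"
    show "e \<in> Free r n G j \<union> U"
    proof (cases "e \<in> Free r n G j")
      case True then show ?thesis by blast
    next
      case nF: False
      have fe: "finite e" using eE unfolding Er_def using finite_subset by blast
      have ce: "card e = r" using eE by (simp add: Er_def)
      show ?thesis
      proof (cases "e \<in> G")
        case True
        obtain p where "p \<subseteq> e" "card p = 2" using obtain_subset_with_card_n[of 2 e] ce r2 by metis
        then have "e \<in> {e' \<in> Er r n. p \<subseteq> e'}" "p \<in> P e" using eE by (auto simp: P_def)
        then show ?thesis using True unfolding U_def by blast
      next
        case False
        have "card (insert e G) = Suc j" using False finG cardG by simp
        with nF False eE have "\<not> linear_rgraph r n (insert e G)"
          by (auto simp: Free_def Lin_def)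
        moreover have "\<forall>x\<in>insert e G. x \<subseteq> {1..n} \<and> card x = r"
          using eE linG by (auto simp: Er_def linear_rgraph_def)
        ultimately obtain x y where xy: "x \<in> insert e G" "y \<in> insert e G" "x \<noteq> y" "\<not> card (x \<inter> y) \<le> 1"
          unfolding linear_rgraph_def by blast
        have "\<exists>f\<in>G. 2 \<le> card (e \<inter> f)"
        proof -
          from xy(1,2,3) consider "x = e" "y \<in> G" | "y = e" "x \<in> G" | "x \<in> G" "y \<in> G"
            by auto
          then show ?thesis
          proof cases
            case 1 then show ?thesis using xy(4) by (intro bexI[of _ y]) auto
          next
            case 2 then show ?thesis using xy(4) by (intro bexI[of _ x]) (auto simp: Int_commute)
          next
            case 3 then have False using xy(3,4) linG unfolding linear_rgraph_def by blast
            then show ?thesis ..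
          qed
        qed
        then obtain f where f: "f \<in> G" "2 \<le> card (e \<inter> f)" by blast
        obtain p where "p \<subseteq> e \<inter> f" "card p = 2" using obtain_subset_with_card_n[OF f(2)] by metis
        then have "e \<in> {e' \<in> Er r n. p \<subseteq> e'}" "p \<in> P f" using eE by (auto simp: P_def)
        then show ?thesis using f unfolding U_def by blast
      qed
    qed
  qed
  have "card (Er r n) \<le> card (Free r n G j \<union> U)"
  proof (rule card_mono[OF _ incl])
    have "Free r n G j \<union> U \<subseteq> Er r n" unfolding U_def Free_def by blast
    then show "finite (Free r n G j \<union> U)" using finite_Er finite_subset by blast
  qed
  also have "\<dots> \<le> card (Free r n G j) + card U" by (rule card_Un_le)
  also have "card U \<le> (\<Sum>g\<in>G. card (\<Union>p\<in>P g. {e \<in> Er r n. p \<subseteq> e}))"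
    unfolding U_def by (rule card_UN_le[OF finG])
  also have "\<dots> \<le> (\<Sum>g\<in>G. (r choose 2) * ((n - 2) choose (r - 2)))"
  proof (rule sum_mono)
    fix g assume g: "g \<in> G"
    have gsub: "g \<subseteq> {1..n}" and cg: "card g = r" using g linG by (auto simp: linear_rgraph_def)
    have fg: "finite g" using gsub finite_subset by blast
    have "card (\<Union>p\<in>P g. {e \<in> Er r n. p \<subseteq> e}) \<le> (\<Sum>p\<in>P g. card {e \<in> Er r n. p \<subseteq> e})"
      by (rule card_UN_le) (use fg in \<open>auto simp: P_def\<close>)
    also have "\<dots> \<le> (\<Sum>p\<in>P g. (n - 2) choose (r - 2))"
      by (rule sum_mono, rule card_contain) (use gsub r2 in \<open>auto simp: P_def\<close>)
    also have "\<dots> = card (P g) * ((n - 2) choose (r - 2))" by simp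
    also have "card (P g) = r choose 2" unfolding P_def using n_subsets[OF fg, of 2] cg by simp
    finally show "card (\<Union>p\<in>P g. {e \<in> Er r n. p \<subseteq> e}) \<le> (r choose 2) * ((n - 2) choose (r - 2))" .
  qed
  also have "\<dots> = j * (r choose 2) * ((n - 2) choose (r - 2))" using cardG by simp
  finally show ?thesis by simp
qed

lemma double_count:
  assumes r2: "2 \<le> r"
  shows "real (card (Lin r n j)) * (real (n choose r) - real j * real (r choose 2) * real ((n - 2) choose (r - 2)))
         \<le> real (Suc j) * real (card (Lin r n (Suc j)))"
proof -
  define A where "A = real j * real (r choose 2) * real ((n - 2) choose (r - 2))"
  have each: "real (n choose r) - A \<le> real (card (Free r n G j))" if G: "G \<in> Lin r n j" for G
  proof -
    have "card (Er r n) \<le> card (Free r n G j) + j * (r choose 2) * ((n - 2) choose (r - 2))"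
      by (rule nonfree_bound[OF G r2])
    hence "real (card (Er r n)) \<le> real (card (Free r n G j) + j * (r choose 2) * ((n - 2) choose (r - 2)))"
      by (rule of_nat_mono)
    then show ?thesis by (simp add: card_Er A_def)
  qed
  have finF: "finite (Free r n G j)" for G
    unfolding Free_def by (rule finite_subset[OF _ finite_Er]) blast
  have "real (card (Lin r n j)) * (real (n choose r) - A) = (\<Sum>G\<in>Lin r n j. real (n choose r) - A)"
    by simp
  also have "\<dots> \<le> (\<Sum>G\<in>Lin r n j. real (card (Free r n G j)))"
    by (rule sum_mono) (rule each)
  also have "\<dots> = real (card (SIGMA G:Lin r n j. Free r n G j))"
    using finite_Lin finF by (simp add: card_SigmaI)
  also have "card (SIGMA G:Lin r n j. Free r n G j) \<le> card (SIGMA H:Lin r n (Suc j). H)"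
  proof (rule card_inj_on_le[where f = "\<lambda>(G, e). (insert e G, e)"])
    show "inj_on (\<lambda>(G, e). (insert e G, e)) (SIGMA G:Lin r n j. Free r n G j)"
    proof (rule inj_onI, clarsimp)
      fix G G' e assume "e \<in> Free r n G j" "e \<in> Free r n G' j" "insert e G = insert e G'"
      moreover have "e \<notin> G" "e \<notin> G'" using calculation(1,2) by (simp_all add: Free_def)
      ultimately show "G = G'" by (metis Diff_insert_absorb)
    qed
    show "(\<lambda>(G, e). (insert e G, e)) ` (SIGMA G:Lin r n j. Free r n G j) \<subseteq> (SIGMA H:Lin r n (Suc j). H)"
    proof (rule image_subsetI)
      fix x assume "x \<in> (SIGMA G:Lin r n j. Free r n G j)"
      then obtain G e where x: "x = (G, e)" "G \<in> Lin r n j" "e \<in> Free r n G j" by blast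
      then show "(\<lambda>(G, e). (insert e G, e)) x \<in> (SIGMA H:Lin r n (Suc j). H)" by (simp add: Free_def)
    qed
    show "finite (SIGMA H:Lin r n (Suc j). H)"
      using finite_Lin Lin_finite_H by (intro finite_SigmaI) auto
  qed
  hence "real (card (SIGMA G:Lin r n j. Free r n G j)) \<le> real (card (SIGMA H:Lin r n (Suc j). H))"
    by simp
  also have "card (SIGMA H:Lin r n (Suc j). H) = (\<Sum>H\<in>Lin r n (Suc j). card H)"
    using finite_Lin Lin_finite_H by (simp add: card_SigmaI)
  also have "\<dots> = (\<Sum>H\<in>Lin r n (Suc j). Suc j)"
    by (rule sum.cong) (auto simp: Lin_def)
  also have "\<dots> = Suc j * card (Lin r n (Suc j))" by simp
  finally show ?thesis unfolding A_def by (simp add: algebra_simps)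
qed

lemma ratio:
  assumes r2: "2 \<le> r" and N: "0 < real (n choose r)"
    and small: "real m * real (r choose 2) * real ((n - 2) choose (r - 2)) \<le> real (n choose r) / 4"
    and jm: "Suc j \<le> m"
  shows "real (card (Lin r n j)) \<le> (4 * real m / (3 * real (n choose r))) * real (card (Lin r n (Suc j)))"
proof -
  define N where "N = real (n choose r)"
  define A where "A = real j * real (r choose 2) * real ((n - 2) choose (r - 2))"
  have "A \<le> real m * real (r choose 2) * real ((n - 2) choose (r - 2))"
    unfolding A_def using jm by (intro mult_right_mono) auto
  hence A: "A \<le> N / 4" using small unfolding N_def by linarith
  have dc: "real (card (Lin r n j)) * (N - A) \<le> real (Suc j) * real (card (Lin r n (Suc j)))"
    using double_count[OF r2, of n j] unfolding N_def A_def .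
  have L0: "0 \<le> real (card (Lin r n j))" by simp
  have "real (card (Lin r n j)) * (3 * N / 4) \<le> real (card (Lin r n j)) * (N - A)"
    using A L0 by (intro mult_left_mono) auto
  also have "\<dots> \<le> real (Suc j) * real (card (Lin r n (Suc j)))" by (rule dc)
  also have "\<dots> \<le> real m * real (card (Lin r n (Suc j)))"
    using jm by (intro mult_right_mono) auto
  finally have "real (card (Lin r n j)) * (3 * N / 4) \<le> real m * real (card (Lin r n (Suc j)))" .
  then show ?thesis using N unfolding N_def[symmetric] by (simp add: field_simps)
qed

lemma iter:
  assumes r2: "2 \<le> r" and N: "0 < real (n choose r)"
    and small: "real m * real (r choose 2) * real ((n - 2) choose (r - 2)) \<le> real (n choose r) / 4"
  shows "i \<le> m \<Longrightarrow> real (card (Lin r n (m - i))) \<le> (4 * real m / (3 * real (n choose r))) ^ i * real (card (Lin r n m))"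
proof (induction i)
  case 0 then show ?case by simp
next
  case (Suc i)
  define \<rho> where "\<rho> = 4 * real m / (3 * real (n choose r))"
  have rho0: "0 \<le> \<rho>" unfolding \<rho>_def using N by simp
  have e: "Suc (m - Suc i) = m - i" using Suc.prems by simp
  have "real (card (Lin r n (m - Suc i))) \<le> \<rho> * real (card (Lin r n (Suc (m - Suc i))))"
    unfolding \<rho>_def by (rule ratio[OF r2 N small]) (use Suc.prems in simp)
  also have "\<dots> = \<rho> * real (card (Lin r n (m - i)))" by (simp only: e)
  also have "\<dots> \<le> \<rho> * (\<rho> ^ i * real (card (Lin r n m)))"
    using Suc.IH Suc.prems rho0 unfolding \<rho>_def by (intro mult_left_mono) auto
  finally show ?case unfolding \<rho>_def by simp
qed

lemma bad_bound:
  assumes r1: "1 \<le> r"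
  shows "card {H \<in> Lin r n m. \<exists>v\<in>{1..n}. k \<le> degree H v} * fact k
         \<le> n * ((n - 1) choose (r - 1)) ^ k * card (Lin r n (m - k))"
proof -
  define Ev where "Ev v = {e \<in> Er r n. {v} \<subseteq> e}" for v
  define Ss where "Ss v = {S. S \<subseteq> Ev v \<and> card S = k}" for v
  define Lk where "Lk = card (Lin r n (m - k))"
  have finEv: "finite (Ev v)" for v unfolding Ev_def using finite_Er by simp
  have cEv: "card (Ev v) \<le> (n - 1) choose (r - 1)" if "v \<in> {1..n}" for v
    unfolding Ev_def by (rule card_contain) (use that r1 in auto)
  have incl: "{H \<in> Lin r n m. \<exists>v\<in>{1..n}. k \<le> degree H v} \<subseteq> (\<Union>v\<in>{1..n}. \<Union>S\<in>Ss v. {H \<in> Lin r n m. S \<subseteq> H})"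
  proof
    fix H assume "H \<in> {H \<in> Lin r n m. \<exists>v\<in>{1..n}. k \<le> degree H v}"
    then obtain v where H: "H \<in> Lin r n m" and v: "v \<in> {1..n}" and d: "k \<le> card {e \<in> H. v \<in> e}"
      unfolding degree_def by blast
    obtain S where S: "S \<subseteq> {e \<in> H. v \<in> e}" "card S = k" using obtain_subset_with_card_n[OF d] by metis
    have "S \<in> Ss v" using S H Lin_sub[of r n m] unfolding Ss_def Ev_def by auto
    then show "H \<in> (\<Union>v\<in>{1..n}. \<Union>S\<in>Ss v. {H \<in> Lin r n m. S \<subseteq> H})" using S H v by blast
  qed
  have cS: "card {H \<in> Lin r n m. S \<subseteq> H} \<le> Lk" if "S \<in> Ss v" for S v
  proof -
    have cS: "card S = k" using that unfolding Ss_def by simp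
    show ?thesis unfolding Lk_def
    proof (rule card_inj_on_le[where f = "\<lambda>H. H - S"])
      show "inj_on (\<lambda>H. H - S) {H \<in> Lin r n m. S \<subseteq> H}" by (rule inj_onI) blast
      show "(\<lambda>H. H - S) ` {H \<in> Lin r n m. S \<subseteq> H} \<subseteq> Lin r n (m - k)"
      proof clarify
        fix H assume H: "H \<in> Lin r n m" "S \<subseteq> H"
        have fH: "finite H" using Lin_finite_H[OF H(1)] .
        have "linear_rgraph r n (H - S)" using H(1) lin_subset unfolding Lin_def by blast
        moreover have "card (H - S) = m - k"
          using H fH cS by (simp add: card_Diff_subset finite_subset Lin_def)
        ultimately show "H - S \<in> Lin r n (m - k)" unfolding Lin_def by simp
      qed
      show "finite (Lin r n (m - k))" by (rule finite_Lin)
    qed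
  qed
  have finSs: "finite (Ss v)" for v unfolding Ss_def using finEv by simp
  have "card {H \<in> Lin r n m. \<exists>v\<in>{1..n}. k \<le> degree H v} \<le> card (\<Union>v\<in>{1..n}. \<Union>S\<in>Ss v. {H \<in> Lin r n m. S \<subseteq> H})"
    by (rule card_mono[OF _ incl], rule finite_subset[OF _ finite_Lin[of r n m]]) auto
  also have "\<dots> \<le> (\<Sum>v\<in>{1..n}. card (\<Union>S\<in>Ss v. {H \<in> Lin r n m. S \<subseteq> H}))"
    by (rule card_UN_le) simp
  also have "\<dots> \<le> (\<Sum>v\<in>{1..n}. card (Ss v) * Lk)"
  proof (rule sum_mono)
    fix v
    have "card (\<Union>S\<in>Ss v. {H \<in> Lin r n m. S \<subseteq> H}) \<le> (\<Sum>S\<in>Ss v. card {H \<in> Lin r n m. S \<subseteq> H})"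
      by (rule card_UN_le[OF finSs])
    also have "\<dots> \<le> (\<Sum>S\<in>Ss v. Lk)" by (rule sum_mono) (rule cS)
    finally show "card (\<Union>S\<in>Ss v. {H \<in> Lin r n m. S \<subseteq> H}) \<le> card (Ss v) * Lk" by simp
  qed
  finally have 1: "card {H \<in> Lin r n m. \<exists>v\<in>{1..n}. k \<le> degree H v} * fact k \<le> (\<Sum>v\<in>{1..n}. card (Ss v) * Lk) * fact k"
    by (rule mult_right_mono) simp
  also have "\<dots> = (\<Sum>v\<in>{1..n}. (card (Ss v) * fact k) * Lk)"
    by (simp only: sum_distrib_right) (simp add: mult_ac)
  also have "\<dots> \<le> (\<Sum>v\<in>{1..n}. ((n - 1) choose (r - 1)) ^ k * Lk)"
  proof (rule sum_mono)
    fix v assume v: "v \<in> {1..n}"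
    have "card (Ss v) = card (Ev v) choose k" unfolding Ss_def by (rule n_subsets[OF finEv])
    hence "card (Ss v) * fact k \<le> card (Ev v) ^ k" using binomial_fact_pow by simp
    also have "\<dots> \<le> ((n - 1) choose (r - 1)) ^ k" by (rule power_mono[OF cEv[OF v]]) simp
    finally show "card (Ss v) * fact k * Lk \<le> ((n - 1) choose (r - 1)) ^ k * Lk"
      by (rule mult_right_mono) simp
  qed
  also have "\<dots> = n * ((n - 1) choose (r - 1)) ^ k * Lk" by simp
  finally show ?thesis unfolding Lk_def .
qed

lemma one_plus_pow_le_e: "k > 0 \<Longrightarrow> (1 + 1 / real k) ^ k \<le> exp 1"
proof -
  assume k: "k > 0"
  have "(1 + 1 / real k) ^ k \<le> exp (1 / real k) ^ k"
    by (rule power_mono) (auto simp: add.commute)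
  also have "\<dots> = exp (real k * (1 / real k))" by (rule exp_of_nat_mult[symmetric])
  also have "\<dots> = exp 1" using k by simp
  finally show ?thesis .
qed

lemma fact_bound: "real k ^ k \<le> exp (real k) * fact k"
proof (induction k)
  case 0 then show ?case by simp
next
  case (Suc k)
  have step: "(real k + 1) ^ k \<le> exp 1 * real k ^ k"
  proof (cases "k = 0")
    case True then show ?thesis by simp
  next
    case False
    hence kp: "real k > 0" by simp
    have eq: "real k + 1 = real k * (1 + 1 / real k)" using kp by (simp add: field_simps)
    have "(real k + 1) ^ k = (real k * (1 + 1 / real k)) ^ k" by (rule arg_cong[where f="\<lambda>t. t ^ k"], fact eq)
    also have "\<dots> = real k ^ k * (1 + 1 / real k) ^ k" by (rule power_mult_distrib)
    also have "\<dots> \<le> real k ^ k * exp 1" using one_plus_pow_le_e[of k] False by (intro mult_left_mono) auto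
    finally show ?thesis by (simp add: mult.commute)
  qed
  have "real (Suc k) ^ Suc k = (real k + 1) * (real k + 1) ^ k" by (simp add: add.commute)
  also have "\<dots> \<le> (real k + 1) * (exp 1 * real k ^ k)" by (intro mult_left_mono step) auto
  also have "\<dots> \<le> (real k + 1) * (exp 1 * (exp (real k) * fact k))"
    by (intro mult_left_mono Suc.IH) auto
  also have "\<dots> = exp (real (Suc k)) * fact (Suc k)"
    by (simp add: exp_add[symmetric] algebra_simps)
  finally show ?case .
qed

lemma e4: "4 * exp (1::real) ^ 4 \<le> 243"
proof -
  have h: "exp 1 ^ 4 \<le> (272/100::real) ^ 4" using e_less_272 by (intro power_mono) auto
  have "(272/100::real) ^ 4 \<le> 243 / 4" by (simp add: power_numeral_even)
  with h show ?thesis by linarith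
qed

lemma analytic:
  fixes n r k :: nat and x :: real
  assumes r3: "3 \<le> r" and n1: "1 \<le> n" and x0: "0 \<le> x"
    and kx: "81 * real r * x \<le> real k" and kL: "ln (real n / real r ^ 2) + 81 \<le> real k"
    and nr: "real r ^ 2 \<le> real n"
  shows "real n * (4 / 3 * x) ^ k / fact k \<le> real r ^ 6 / real n ^ 3"
proof -
  define q where "q = 4 * exp 1 / (243 * real r)"
  define a where "a = ln (real r)"
  define L where "L = ln (real n / real r ^ 2)"
  have rp: "real r > 0" using r3 by simp
  have np: "real n > 0" using n1 by simp
  have qp: "q > 0" unfolding q_def using rp by simp
  have L0: "L \<ge> 0" unfolding L_def using nr rp by simp
  have k81: "real k \<ge> 81" using kL L0 unfolding L_def by linarith
  have kp: "real k > 0" using k81 by simp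
  have a1: "a \<ge> 1"
  proof -
    have "exp 1 \<le> real r" using e_less_272 r3 by linarith
    hence "ln (exp 1) \<le> ln (real r)" using rp by (subst ln_le_cancel_iff) auto
    thus ?thesis unfolding a_def by simp
  qed
  have lnn: "ln (real n) = L + 2 * a"
    unfolding L_def a_def using np rp by (simp add: ln_div ln_realpow)
  have lnq: "ln q \<le> - 3 - a"
  proof -
    have "ln q = ln (4 * exp 1 / 243) - a" unfolding q_def a_def using rp
      by (simp add: ln_div ln_mult)
    moreover have "ln (4 * exp 1 / 243 :: real) \<le> -3"
    proof -
      have "4 * exp 1 / 243 \<le> exp (-3::real)"
      proof -
        have h4: "4 * exp (1::real) ^ 4 \<le> 243" by (rule e4)
        have "exp (1::real) * exp 3 = exp 4" by (simp add: exp_add[symmetric])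
        also have "exp (4::real) = exp 1 ^ 4" using exp_of_nat_mult[of 4 "1::real"] by simp
        finally have "4 * exp 1 * exp 3 \<le> (243::real)" using h4 by (simp add: mult.assoc)
        thus ?thesis by (simp add: exp_minus field_simps)
      qed
      hence "ln (4 * exp 1 / 243 :: real) \<le> ln (exp (-3))" by (subst ln_le_cancel_iff) auto
      thus ?thesis by simp
    qed
    ultimately show ?thesis by linarith
  qed
  have "(4 / 3 * x) ^ k / fact k \<le> (4 / 3 * x) ^ k * (exp (real k) / real k ^ k)"
  proof -
    have "real k ^ k \<le> exp (real k) * fact k" by (rule fact_bound)
    hence "1 / fact k \<le> exp (real k) / real k ^ k" using kp by (simp add: field_simps)
    hence "(4 / 3 * x) ^ k * (1 / fact k) \<le> (4 / 3 * x) ^ k * (exp (real k) / real k ^ k)"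
      by (rule mult_left_mono) (use x0 in simp)
    thus ?thesis by simp
  qed
  also have "\<dots> = (4 * exp 1 * x / (3 * real k)) ^ k"
  proof -
    have ek: "exp (real k) = exp 1 ^ k" using exp_of_nat_mult[of k "1::real"] by simp
    have "(4 / 3 * x) ^ k * (exp (real k) / real k ^ k) = ((4 / 3 * x) * exp 1 / real k) ^ k"
      unfolding ek by (simp only: power_mult_distrib power_divide times_divide_eq_right)
    also have "(4 / 3 * x) * exp 1 / real k = 4 * exp 1 * x / (3 * real k)" by simp
    finally show ?thesis .
  qed
  also have "\<dots> \<le> q ^ k"
  proof (rule power_mono)
    show "0 \<le> 4 * exp 1 * x / (3 * real k)" using x0 kp by simp
    have "x * 243 * real r = 3 * (81 * real r * x)" by (simp add: mult_ac)
    hence "x * 243 * real r \<le> 3 * real k" using kx by linarith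
    then show "4 * exp 1 * x / (3 * real k) \<le> q" unfolding q_def using kp rp
      by (simp add: field_simps)
  qed
  finally have s0: "(4 / 3 * x) ^ k / fact k \<le> q ^ k" .
  have s1: "real n * ((4 / 3 * x) ^ k / fact k) \<le> real n * q ^ k"
    by (rule mult_left_mono[OF s0]) (use np in simp)
  have "ln (real n * q ^ k) = ln (real n) + real k * ln q" using np qp by (simp add: ln_mult ln_realpow)
  also have "\<dots> \<le> ln (real n) + (L + 81) * ln q"
  proof -
    have "ln q \<le> 0" using lnq a1 by linarith
    hence "real k * ln q \<le> (L + 81) * ln q" using kL unfolding L_def by (intro mult_right_mono_neg) auto
    thus ?thesis by simp
  qed
  also have "\<dots> \<le> ln (real n) + (L + 81) * (- 3 - a)"
    using lnq L0 by (intro add_left_mono mult_left_mono) auto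
  also have "\<dots> \<le> 6 * a - 3 * ln (real n)"
  proof -
    have "L * a \<ge> L" using L0 a1 by (metis mult_left_mono mult.right_neutral)
    thus ?thesis unfolding lnn using a1 L0 by (simp add: algebra_simps)
  qed
  also have "\<dots> = ln (real r ^ 6 / real n ^ 3)" unfolding a_def using np rp by (simp add: ln_div ln_realpow)
  finally have "real n * q ^ k \<le> real r ^ 6 / real n ^ 3"
    using np qp rp by (subst (asm) ln_le_cancel_iff) auto
  with s1 show ?thesis by (simp only: times_divide_eq_right)
qed

lemma degree_le: "H \<in> Lin r n m \<Longrightarrow> degree H v \<le> m"
proof -
  assume H: "H \<in> Lin r n m"
  have "degree H v \<le> card H" unfolding degree_def
    by (rule card_mono[OF Lin_finite_H[OF H]]) auto
  thus ?thesis using H by (simp add: Lin_def)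
qed

lemma choose2_real: "real (r choose 2) = real r * (real r - 1) / 2" if "1 \<le> r"
proof -
  have ev: "even (r * (r - 1))" by (cases "even r") auto
  have "2 * (r choose 2) = r * (r - 1)"
    using choose_two[of r] even_two_times_div_two[OF ev] by simp
  hence "2 * real (r choose 2) = real r * real (r - 1)" by (metis of_nat_mult of_nat_numeral)
  thus ?thesis using that by (simp add: of_nat_diff)
qed

lemma core:
  fixes r n m :: nat
  assumes r3: "3 \<le> r" and n2: "2 \<le> n" and nr: "4 * real r ^ 2 \<le> real n"
    and small: "4 * real m * real r ^ 4 \<le> real n ^ 2" and mlow: "real n \<le> real m * real r ^ 2"
  shows "real (card {H \<in> Lin r n m. \<not> (\<forall>v\<in>{1..n}. int (degree H v) \<le> M0star r n m)})
         \<le> real r ^ 6 / real n ^ 3 * real (card (Lin r n m))"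
proof -
  define M where "M = M0star r n m"
  define k where "k = nat (M + 1)"
  define x where "x = real m * real r / real n"
  define N where "N = real (n choose r)"
  define Lm where "Lm = real (card (Lin r n m))"
  have rp: "real r > 0" using r3 by simp
  have np: "real n > 0" using n2 by simp
  have rn2: "real r ^ 2 \<le> real n" using nr zero_le_power2[of "real r"] by linarith
  have x0: "0 \<le> x" unfolding x_def by simp
  have L0: "0 \<le> ln (real n / real r ^ 2)" using rn2 rp by simp
  have rx: "81 * real r * x = 3 ^ 4 * real r ^ 2 * real m / real n"
    unfolding x_def by (simp add: power2_eq_square)
  have M1: "ln (real n / real r ^ 2) + 81 * real r * x \<le> real_of_int M"
    unfolding M_def M0star_def rx by (rule le_of_int_ceiling)
  have rx81: "81 \<le> 81 * real r * x"
  proof -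
    have "real n / real n \<le> real m * real r ^ 2 / real n" using mlow np by (intro divide_right_mono) auto
    hence "1 \<le> real m * real r ^ 2 / real n" using np by simp
    moreover have "real r * x = real m * real r ^ 2 / real n" unfolding x_def by (simp add: power2_eq_square)
    ultimately show ?thesis by linarith
  qed
  have Mpos: "M \<ge> 0" using M1 L0 rx81 by linarith
  have kM: "real k = real_of_int M + 1" unfolding k_def using Mpos by simp
  have kx: "81 * real r * x \<le> real k" using kM M1 L0 by linarith
  have kL: "ln (real n / real r ^ 2) + 81 \<le> real k" using kM M1 rx81 by linarith
  have badeq: "{H \<in> Lin r n m. \<not> (\<forall>v\<in>{1..n}. int (degree H v) \<le> M0star r n m)}
             = {H \<in> Lin r n m. \<exists>v\<in>{1..n}. k \<le> degree H v}"
  proof -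
    have "\<not> int d \<le> M \<longleftrightarrow> k \<le> d" for d unfolding k_def using Mpos by linarith
    thus ?thesis unfolding M_def[symmetric] by auto
  qed
  show ?thesis
  proof (cases "k \<le> m")
    case False
    have e: "{H \<in> Lin r n m. \<exists>v\<in>{1..n}. k \<le> degree H v} = {}"
    proof (rule equals0I)
      fix H assume "H \<in> {H \<in> Lin r n m. \<exists>v\<in>{1..n}. k \<le> degree H v}"
      then obtain v where H: "H \<in> Lin r n m" and kd: "k \<le> degree H v" by blast
      have "degree H v \<le> m" by (rule degree_le[OF H])
      with kd False show False by linarith
    qed
    show ?thesis unfolding badeq e using rp np by simp
  next
    case km: True
    have r2: "2 \<le> r" using r3 by simp
    have rn: "r \<le> n"
    proof -
      have "real r \<le> real r ^ 2" using r3 by (simp add: power2_eq_square)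
      thus ?thesis using rn2 by linarith
    qed
    have Np: "0 < N" unfolding N_def using rn by simp
    have id2: "real n * (real n - 1) * real ((n - 2) choose (r - 2)) = real r * (real r - 1) * N"
    proof -
      have "real (n * (n - 1) * ((n - 2) choose (r - 2))) = real (r * (r - 1) * (n choose r))"
        using binom_id2[OF r2 n2] by simp
      thus ?thesis unfolding N_def using r2 n2 by (simp add: of_nat_diff)
    qed
    have smallc: "real m * real (r choose 2) * real ((n - 2) choose (r - 2)) \<le> N / 4"
    proof -
      define P where "P = real ((n - 2) choose (r - 2))"
      have P0: "0 \<le> P" unfolding P_def by simp
      have nn: "real n ^ 2 \<le> 2 * (real n * (real n - 1))" using n2 by (simp add: power2_eq_square algebra_simps)
      have rr: "(real r * (real r - 1)) ^ 2 \<le> real r ^ 4"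
      proof -
        have "0 \<le> real r * (real r - 1)" "real r * (real r - 1) \<le> real r ^ 2" using r3 by (auto simp: power2_eq_square)
        hence "(real r * (real r - 1)) ^ 2 \<le> (real r ^ 2) ^ 2" by (intro power_mono) auto
        thus ?thesis by simp
      qed
      define Q where "Q = real (r choose 2)"
      have Q2: "2 * Q = real r * (real r - 1)" unfolding Q_def using choose2_real[of r] r3 by simp
      have idP: "real n * (real n - 1) * P = real r * (real r - 1) * N" using id2 unfolding P_def .
      define R where "R = real r * (real r - 1)"
      have "8 * (real m * Q * P) * (real n * (real n - 1))
            = 4 * real m * (2 * Q) * (real n * (real n - 1) * P)" by (simp add: algebra_simps)
      also have "\<dots> = 4 * real m * R * (R * N)" unfolding Q2 idP R_def ..
      also have "\<dots> = 4 * real m * R ^ 2 * N" by (simp add: power2_eq_square)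
      also have "\<dots> \<le> 4 * real m * real r ^ 4 * N"
        using rr Np unfolding R_def by (intro mult_right_mono mult_left_mono) auto
      also have "\<dots> \<le> real n ^ 2 * N" using small Np by (intro mult_right_mono) auto
      also have "\<dots> \<le> 2 * (real n * (real n - 1)) * N" using nn Np by (intro mult_right_mono) auto
      also have "\<dots> = (2 * N) * (real n * (real n - 1))" by (simp only: mult_ac)
      finally have "8 * (real m * Q * P) * (real n * (real n - 1)) \<le> (2 * N) * (real n * (real n - 1))" .
      moreover have "real n * (real n - 1) > 0" using n2 by simp
      ultimately have "8 * (real m * Q * P) \<le> 2 * N"
        by (rule mult_right_le_imp_le)
      thus ?thesis unfolding P_def Q_def by simp
    qed
    have it: "real (card (Lin r n (m - k))) \<le> (4 * real m / (3 * N)) ^ k * Lm"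
      unfolding N_def Lm_def by (rule iter[OF r2 Np[unfolded N_def] smallc[unfolded N_def] km])
    define Nv where "Nv = real ((n - 1) choose (r - 1))"
    have id1: "real n * Nv = real r * N"
    proof -
      have "real (n * ((n - 1) choose (r - 1))) = real (r * (n choose r))" using binom_id1[of r n] r3 n2 by simp
      thus ?thesis unfolding Nv_def N_def by simp
    qed
    have bb: "real (card {H \<in> Lin r n m. \<exists>v\<in>{1..n}. k \<le> degree H v}) * fact k
              \<le> real n * Nv ^ k * real (card (Lin r n (m - k)))"
    proof -
      have "card {H \<in> Lin r n m. \<exists>v\<in>{1..n}. k \<le> degree H v} * fact k
         \<le> n * ((n - 1) choose (r - 1)) ^ k * card (Lin r n (m - k))"
        by (rule bad_bound) (use r3 in simp)
      hence "real (card {H \<in> Lin r n m. \<exists>v\<in>{1..n}. k \<le> degree H v} * fact k)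
         \<le> real (n * ((n - 1) choose (r - 1)) ^ k * card (Lin r n (m - k)))" by (rule of_nat_mono)
      thus ?thesis unfolding Nv_def by simp
    qed
    also have "\<dots> \<le> real n * Nv ^ k * ((4 * real m / (3 * N)) ^ k * Lm)"
      using it unfolding Nv_def by (intro mult_left_mono) auto
    also have "\<dots> = real n * (Nv * (4 * real m / (3 * N))) ^ k * Lm" by (simp only: power_mult_distrib mult.assoc)
    also have "Nv * (4 * real m / (3 * N)) = 4 / 3 * x"
    proof -
      have "Nv = real r * N / real n" using id1 np by (simp add: field_simps)
      thus ?thesis unfolding x_def using Np np by (simp add: field_simps)
    qed
    finally have B: "real (card {H \<in> Lin r n m. \<exists>v\<in>{1..n}. k \<le> degree H v}) * fact k
        \<le> real n * (4 / 3 * x) ^ k * Lm" .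
    have A: "real n * (4 / 3 * x) ^ k / fact k \<le> real r ^ 6 / real n ^ 3"
      by (rule analytic[OF r3 _ x0 kx kL rn2]) (use n2 in simp)
    have "real (card {H \<in> Lin r n m. \<exists>v\<in>{1..n}. k \<le> degree H v})
        \<le> real n * (4 / 3 * x) ^ k / fact k * Lm"
      using B by (simp add: field_simps)
    also have "\<dots> \<le> real r ^ 6 / real n ^ 3 * Lm"
      using A unfolding Lm_def by (intro mult_right_mono) auto
    finally show ?thesis unfolding badeq Lm_def .
  qed
qed

lemma hyps:
  fixes n r m :: nat
  assumes r3: "3 \<le> r" and n2: "2 \<le> n" and ml: "real n / real r ^ 2 \<le> real m"
    and mu: "real m \<le> 1 / 2 * (real n powr (3 / 2) / real r ^ 3)"
  shows "4 * real r ^ 2 \<le> real n \<and> 4 * real m * real r ^ 4 \<le> real n ^ 2 \<and> real n \<le> real m * real r ^ 2"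
proof -
  define s where "s = sqrt (real n)"
  have rp: "real r > 0" using r3 by simp
  have sp: "s > 0" unfolding s_def using n2 by simp
  have ns: "real n = s ^ 2" unfolding s_def by simp
  have pw: "real n powr (3 / 2) = real n * s"
  proof -
    have "real n powr (3 / 2) = real n powr (1 + 1 / 2)" by simp
    also have "\<dots> = real n powr 1 * real n powr (1 / 2)" by (rule powr_add)
    also have "\<dots> = real n * s" unfolding s_def using n2 by (simp add: powr_half_sqrt)
    finally show ?thesis .
  qed
  have A: "real n \<le> real m * real r ^ 2" using ml rp by (simp add: field_simps)
  have B: "2 * real r ^ 3 * real m \<le> real n * s" using mu rp unfolding pw by (simp add: field_simps)
  have C: "2 * real r * real n \<le> real n * s"
  proof -
    have "2 * real r * real n \<le> 2 * real r * (real m * real r ^ 2)" using A rp by (intro mult_left_mono) auto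
    also have "\<dots> = 2 * real r ^ 3 * real m" by (simp add: power2_eq_square power3_eq_cube)
    finally show ?thesis using B by linarith
  qed
  have D: "2 * real r \<le> s"
  proof -
    have "(2 * real r) * real n \<le> s * real n" using C by (simp add: mult_ac)
    thus ?thesis using n2 by (simp add: mult_le_cancel_right)
  qed
  have 1: "4 * real r ^ 2 \<le> real n"
  proof -
    have "(2 * real r) ^ 2 \<le> s ^ 2" using D rp by (intro power_mono) auto
    thus ?thesis unfolding ns by (simp add: power_mult_distrib)
  qed
  have 2: "4 * real m * real r ^ 4 \<le> real n ^ 2"
  proof -
    have "4 * real m * real r ^ 4 = (2 * real r) * (2 * real r ^ 3 * real m)"
      by (simp add: power_def mult_ac)
    also have "\<dots> \<le> (2 * real r) * (real n * s)" using B rp by (intro mult_left_mono) auto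
    also have "\<dots> \<le> s * (real n * s)" using D sp n2 by (intro mult_right_mono) auto
    also have "\<dots> = real n ^ 2" unfolding ns by (simp add: power2_eq_square)
    finally show ?thesis .
  qed
  show ?thesis using 1 2 A by simp
qed

theorem theorem4p1:
  fixes r m :: "nat \<Rightarrow> nat"
  assumes r_ge: "\<And>n. r n \<ge> 3"
    and m_lower: "\<And>n. real n / real (r n) ^ 2 \<le> real (m n)"
    and m_upper: "(\<lambda>n. real (m n)) \<in> o(\<lambda>n. real n powr (3/2) / real (r n) ^ 3)"
  shows "\<exists>f :: nat \<Rightarrow> real. f \<in> O(\<lambda>n. real (r n) ^ 6 / real n ^ 3) \<and>
    (\<forall>\<^sub>F n in at_top.
       real (card {H \<in> Lin (r n) n (m n). \<forall>v\<in>{1..n}. int (degree H v) \<le> M0star (r n) n (m n)})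
       = (1 - f n) * real (card (Lin (r n) n (m n))))"
proof -
  define G where "G n = {H \<in> Lin (r n) n (m n). \<forall>v\<in>{1..n}. int (degree H v) \<le> M0star (r n) n (m n)}" for n
  define B where "B n = {H \<in> Lin (r n) n (m n). \<not> (\<forall>v\<in>{1..n}. int (degree H v) \<le> M0star (r n) n (m n))}" for n
  define L where "L n = card (Lin (r n) n (m n))" for n
  define f where "f n = (if L n = 0 then 0 else real (card (B n)) / real (L n))" for n
  have split: "card (G n) + card (B n) = L n" for n
  proof -
    have "card (G n \<union> B n) = card (G n) + card (B n)"
      by (rule card_Un_disjoint) (auto simp: G_def B_def intro: finite_subset[OF _ finite_Lin])
    moreover have "G n \<union> B n = Lin (r n) n (m n)" unfolding G_def B_def by blast
    ultimately show ?thesis unfolding L_def by simp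
  qed
  have eq: "real (card (G n)) = (1 - f n) * real (L n)" for n
  proof (cases "L n = 0")
    case True then show ?thesis using split[of n] by (simp add: f_def)
  next
    case False
    have "real (card (G n)) = real (L n) - real (card (B n))" using split[of n] by simp
    moreover have "(1 - real (card (B n)) / real (L n)) * real (L n)
        = real (L n) - real (card (B n)) / real (L n) * real (L n)" by (simp add: left_diff_distrib)
    moreover have "real (card (B n)) / real (L n) * real (L n) = real (card (B n))" using False by simp
    ultimately show ?thesis using False by (simp add: f_def)
  qed
  have ev1: "\<forall>\<^sub>F n in at_top. norm (real (m n)) \<le> 1 / 2 * norm (real n powr (3/2) / real (r n) ^ 3)"
    by (rule landau_o.smallD[OF m_upper]) simp
  have ev2: "\<forall>\<^sub>F n in at_top. (2::nat) \<le> n" by (rule eventually_ge_at_top)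
  have evf: "\<forall>\<^sub>F n in at_top. norm (f n) \<le> 1 * norm (real (r n) ^ 6 / real n ^ 3)"
    using ev1 ev2
  proof eventually_elim
    case (elim n)
    have mu: "real (m n) \<le> 1 / 2 * (real n powr (3 / 2) / real (r n) ^ 3)" using elim(1) by simp
    have h: "4 * real (r n) ^ 2 \<le> real n \<and> 4 * real (m n) * real (r n) ^ 4 \<le> real n ^ 2 \<and>
             real n \<le> real (m n) * real (r n) ^ 2"
      by (rule hyps[OF r_ge elim(2) m_lower mu])
    have c: "real (card (B n)) \<le> real (r n) ^ 6 / real n ^ 3 * real (L n)"
      unfolding B_def L_def using h by (intro core[OF r_ge elim(2)]) auto
    have f0: "0 \<le> f n" unfolding f_def by simp
    have "f n \<le> real (r n) ^ 6 / real n ^ 3"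
    proof (cases "L n = 0")
      case True then show ?thesis by (simp add: f_def)
    next
      case False
      then show ?thesis using c by (simp add: f_def divide_le_eq)
    qed
    then show ?case using f0 by simp
  qed
  have "f \<in> O(\<lambda>n. real (r n) ^ 6 / real n ^ 3)" by (rule bigoI[OF evf])
  moreover have "\<forall>\<^sub>F n in at_top. real (card (G n)) = (1 - f n) * real (L n)" by (simp add: eq)
  ultimately show ?thesis unfolding G_def L_def by blast
qed

end
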